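(* Let $A\overset{i}{\to}U\overset{j}{\to}G$ be an extension of a semilattice of groups $A$ by a group $G$, and let $S$ be an inverse semigroup with epimorphisms $\pi:U\to S$, $\kappa:S\to G$ such that $A\overset{i}{\to}U\overset{\pi}{\to}S$ is an extension of $A$ by $S$ and $j=\kappa\circ\pi$ (so that the fibres $\kappa^{-1}(x)$ are exactly the $\sigma$-classes of $S$). Then for $x\in G$, the $\sigma$-class $\kappa^{-1}(x)$ has a maximum element (with respect to the natural partial order of $S$) if and only if $j^{-1}(x)=u_x\,i(A)$ for some $u_x\in j^{-1}(x)$.
   Context: A semilattice of groups is an inverse semigroup whose idempotents are central. An extension of $A$ by a group $G$ is an inverse semigroup $U$ with a monomorphism $i:A\to U$ and an epimorphism $j:U\to G$ with $i(A)=j^{-1}(1)$. An extension of $A$ by an inverse semigroup $S$ is an inverse semigroup $U$ with a monomorphism $i:A\to U$ and an idempotent-separating epimorphism $\pi:U\to S$ with $i(A)=\pi^{-1}(E(S))$. $\sigma$ is the minimum group congruence on $S$ ($(s,t)\in\sigma$ iff $es=et$ for some $e\in E(S)$). *)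

theory Defs
  imports "HOL-Algebra.Group"
begin

text \<open>Inverse semigroups are represented as HOL-Algebra monoid records whose
  \<open>one\<close> field is ignored: only the carrier and the multiplication matter.\<close>

definition inverse_semigroup :: "'a monoid \<Rightarrow> bool" where
  "inverse_semigroup S \<longleftrightarrow>
     (\<forall>x\<in>carrier S. \<forall>y\<in>carrier S. x \<otimes>\<^bsub>S\<^esub> y \<in> carrier S) \<and>
     (\<forall>x\<in>carrier S. \<forall>y\<in>carrier S. \<forall>z\<in>carrier S.
        (x \<otimes>\<^bsub>S\<^esub> y) \<otimes>\<^bsub>S\<^esub> z = x \<otimes>\<^bsub>S\<^esub> (y \<otimes>\<^bsub>S\<^esub> z)) \<and>
     (\<forall>a\<in>carrier S. \<exists>!b. b \<in> carrier S \<and>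
        a \<otimes>\<^bsub>S\<^esub> b \<otimes>\<^bsub>S\<^esub> a = a \<and> b \<otimes>\<^bsub>S\<^esub> a \<otimes>\<^bsub>S\<^esub> b = b)"

definition idempotents :: "'a monoid \<Rightarrow> 'a set" ("E") where
  "idempotents S = {e \<in> carrier S. e \<otimes>\<^bsub>S\<^esub> e = e}"

definition semilattice_of_groups :: "'a monoid \<Rightarrow> bool" where
  "semilattice_of_groups A \<longleftrightarrow> inverse_semigroup A \<and>
     (\<forall>e\<in>idempotents A. \<forall>a\<in>carrier A. e \<otimes>\<^bsub>A\<^esub> a = a \<otimes>\<^bsub>A\<^esub> e)"

definition sg_hom :: "'a monoid \<Rightarrow> 'b monoid \<Rightarrow> ('a \<Rightarrow> 'b) \<Rightarrow> bool" where
  "sg_hom S T f \<longleftrightarrow> f \<in> carrier S \<rightarrow> carrier T \<and>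
     (\<forall>x\<in>carrier S. \<forall>y\<in>carrier S. f (x \<otimes>\<^bsub>S\<^esub> y) = f x \<otimes>\<^bsub>T\<^esub> f y)"

definition sg_mono :: "'a monoid \<Rightarrow> 'b monoid \<Rightarrow> ('a \<Rightarrow> 'b) \<Rightarrow> bool" where
  "sg_mono S T f \<longleftrightarrow> sg_hom S T f \<and> inj_on f (carrier S)"

definition sg_epi :: "'a monoid \<Rightarrow> 'b monoid \<Rightarrow> ('a \<Rightarrow> 'b) \<Rightarrow> bool" where
  "sg_epi S T f \<longleftrightarrow> sg_hom S T f \<and> f ` carrier S = carrier T"

definition group_extension ::
  "'a monoid \<Rightarrow> 'u monoid \<Rightarrow> 'g monoid \<Rightarrow> ('a \<Rightarrow> 'u) \<Rightarrow> ('u \<Rightarrow> 'g) \<Rightarrow> bool" where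
  "group_extension A U G i j \<longleftrightarrow> inverse_semigroup A \<and> inverse_semigroup U \<and> group G \<and>
     sg_mono A U i \<and> sg_epi U G j \<and>
     i ` carrier A = {u \<in> carrier U. j u = \<one>\<^bsub>G\<^esub>}"

definition is_extension ::
  "'a monoid \<Rightarrow> 'u monoid \<Rightarrow> 's monoid \<Rightarrow> ('a \<Rightarrow> 'u) \<Rightarrow> ('u \<Rightarrow> 's) \<Rightarrow> bool" where
  "is_extension A U S i p \<longleftrightarrow> inverse_semigroup A \<and> inverse_semigroup U \<and> inverse_semigroup S \<and>
     sg_mono A U i \<and> sg_epi U S p \<and>
     (\<forall>e\<in>idempotents U. \<forall>f\<in>idempotents U. p e = p f \<longrightarrow> e = f) \<and>
     i ` carrier A = {u \<in> carrier U. p u \<in> idempotents S}"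

definition nat_le :: "'a monoid \<Rightarrow> 'a \<Rightarrow> 'a \<Rightarrow> bool" where
  "nat_le S s t \<longleftrightarrow> (\<exists>e\<in>idempotents S. s = e \<otimes>\<^bsub>S\<^esub> t)"

definition is_maximum :: "'a monoid \<Rightarrow> 'a set \<Rightarrow> 'a \<Rightarrow> bool" where
  "is_maximum S X m \<longleftrightarrow> m \<in> X \<and> (\<forall>x\<in>X. nat_le S x m)"

end

theory Submission
  imports Defs
begin

definition sinv :: "'a monoid \<Rightarrow> 'a \<Rightarrow> 'a" where
  "sinv S a = (THE b. b \<in> carrier S \<and> a \<otimes>\<^bsub>S\<^esub> b \<otimes>\<^bsub>S\<^esub> a = a \<and> b \<otimes>\<^bsub>S\<^esub> a \<otimes>\<^bsub>S\<^esub> b = b)"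

lemma is_closed: "inverse_semigroup S \<Longrightarrow> x \<in> carrier S \<Longrightarrow> y \<in> carrier S \<Longrightarrow> x \<otimes>\<^bsub>S\<^esub> y \<in> carrier S"
  unfolding inverse_semigroup_def by blast

lemma is_assoc: "inverse_semigroup S \<Longrightarrow> x \<in> carrier S \<Longrightarrow> y \<in> carrier S \<Longrightarrow> z \<in> carrier S \<Longrightarrow>
   (x \<otimes>\<^bsub>S\<^esub> y) \<otimes>\<^bsub>S\<^esub> z = x \<otimes>\<^bsub>S\<^esub> (y \<otimes>\<^bsub>S\<^esub> z)"
  unfolding inverse_semigroup_def by blast

lemma sinv_props:
  assumes "inverse_semigroup S" "a \<in> carrier S"
  shows "sinv S a \<in> carrier S" "a \<otimes>\<^bsub>S\<^esub> sinv S a \<otimes>\<^bsub>S\<^esub> a = a" "sinv S a \<otimes>\<^bsub>S\<^esub> a \<otimes>\<^bsub>S\<^esub> sinv S a = sinv S a"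
proof -
  have "\<exists>!b. b \<in> carrier S \<and> a \<otimes>\<^bsub>S\<^esub> b \<otimes>\<^bsub>S\<^esub> a = a \<and> b \<otimes>\<^bsub>S\<^esub> a \<otimes>\<^bsub>S\<^esub> b = b"
    using assms unfolding inverse_semigroup_def by blast
  from theI'[OF this] show "sinv S a \<in> carrier S" "a \<otimes>\<^bsub>S\<^esub> sinv S a \<otimes>\<^bsub>S\<^esub> a = a" "sinv S a \<otimes>\<^bsub>S\<^esub> a \<otimes>\<^bsub>S\<^esub> sinv S a = sinv S a"
    unfolding sinv_def by auto
qed

lemma sinv_unique:
  assumes "inverse_semigroup S" "a \<in> carrier S" "b \<in> carrier S"
    "a \<otimes>\<^bsub>S\<^esub> b \<otimes>\<^bsub>S\<^esub> a = a" "b \<otimes>\<^bsub>S\<^esub> a \<otimes>\<^bsub>S\<^esub> b = b"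
  shows "b = sinv S a"
proof -
  have "\<exists>!b. b \<in> carrier S \<and> a \<otimes>\<^bsub>S\<^esub> b \<otimes>\<^bsub>S\<^esub> a = a \<and> b \<otimes>\<^bsub>S\<^esub> a \<otimes>\<^bsub>S\<^esub> b = b"
    using assms unfolding inverse_semigroup_def by blast
  then show ?thesis using assms sinv_props[OF assms(1,2)] by blast
qed

lemma idem_mult:
  assumes S: "inverse_semigroup S" and e: "e \<in> idempotents S" and f: "f \<in> idempotents S"
  shows "e \<otimes>\<^bsub>S\<^esub> f \<in> idempotents S"
proof -
  note cl = is_closed[OF S] and as = is_assoc[OF S]
  have ec: "e \<in> carrier S" and ee: "e \<otimes>\<^bsub>S\<^esub> e = e" using e by (auto simp: idempotents_def)
  have fc: "f \<in> carrier S" and ff: "f \<otimes>\<^bsub>S\<^esub> f = f" using f by (auto simp: idempotents_def)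
  define x where "x = e \<otimes>\<^bsub>S\<^esub> f"
  have xc: "x \<in> carrier S" using cl ec fc x_def by auto
  define a where "a = sinv S x"
  have ac: "a \<in> carrier S" and a1: "x \<otimes>\<^bsub>S\<^esub> a \<otimes>\<^bsub>S\<^esub> x = x" and a2: "a \<otimes>\<^bsub>S\<^esub> x \<otimes>\<^bsub>S\<^esub> a = a"
    using sinv_props[OF S xc] a_def by auto
  define b where "b = f \<otimes>\<^bsub>S\<^esub> a \<otimes>\<^bsub>S\<^esub> e"
  have bc: "b \<in> carrier S" using cl ac ec fc b_def by auto
  have b1: "x \<otimes>\<^bsub>S\<^esub> b \<otimes>\<^bsub>S\<^esub> x = x"
  proof -
    have "x \<otimes>\<^bsub>S\<^esub> b \<otimes>\<^bsub>S\<^esub> x = e \<otimes>\<^bsub>S\<^esub> (f \<otimes>\<^bsub>S\<^esub> f) \<otimes>\<^bsub>S\<^esub> a \<otimes>\<^bsub>S\<^esub> (e \<otimes>\<^bsub>S\<^esub> e) \<otimes>\<^bsub>S\<^esub> f"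
      unfolding x_def b_def using cl as ec fc ac by simp
    also have "\<dots> = x \<otimes>\<^bsub>S\<^esub> a \<otimes>\<^bsub>S\<^esub> x" unfolding x_def ff ee using cl as ec fc ac by simp
    finally show ?thesis using a1 by simp
  qed
  have b2: "b \<otimes>\<^bsub>S\<^esub> x \<otimes>\<^bsub>S\<^esub> b = b"
  proof -
    have "b \<otimes>\<^bsub>S\<^esub> x \<otimes>\<^bsub>S\<^esub> b = f \<otimes>\<^bsub>S\<^esub> a \<otimes>\<^bsub>S\<^esub> (e \<otimes>\<^bsub>S\<^esub> e) \<otimes>\<^bsub>S\<^esub> (f \<otimes>\<^bsub>S\<^esub> f) \<otimes>\<^bsub>S\<^esub> a \<otimes>\<^bsub>S\<^esub> e"
      unfolding x_def b_def using cl as ec fc ac by simp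
    also have "\<dots> = f \<otimes>\<^bsub>S\<^esub> (a \<otimes>\<^bsub>S\<^esub> x \<otimes>\<^bsub>S\<^esub> a) \<otimes>\<^bsub>S\<^esub> e" unfolding x_def ff ee using cl as ec fc ac by simp
    finally show ?thesis using a2 b_def by simp
  qed
  have ba: "b = a" using sinv_unique[OF S xc bc b1 b2] a_def by simp
  have aa: "a \<otimes>\<^bsub>S\<^esub> a = a"
  proof -
    have "a \<otimes>\<^bsub>S\<^esub> a = b \<otimes>\<^bsub>S\<^esub> b" using ba by simp
    also have "\<dots> = f \<otimes>\<^bsub>S\<^esub> (a \<otimes>\<^bsub>S\<^esub> x \<otimes>\<^bsub>S\<^esub> a) \<otimes>\<^bsub>S\<^esub> e"
      unfolding b_def x_def using cl as ec fc ac by simp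
    also have "\<dots> = b" using a2 b_def by simp
    finally show ?thesis using ba by simp
  qed
  have "x = sinv S a"
    using sinv_unique[OF S ac xc] a1 a2 cl as ac xc by simp
  moreover have "a = sinv S a"
    using sinv_unique[OF S ac ac] aa by simp
  ultimately have "x = a" by simp
  then show ?thesis using aa xc x_def by (simp add: idempotents_def)
qed

lemma idem_comm:
  assumes S: "inverse_semigroup S" and e: "e \<in> idempotents S" and f: "f \<in> idempotents S"
  shows "e \<otimes>\<^bsub>S\<^esub> f = f \<otimes>\<^bsub>S\<^esub> e"
proof -
  note cl = is_closed[OF S] and as = is_assoc[OF S]
  have ec: "e \<in> carrier S" and ee: "e \<otimes>\<^bsub>S\<^esub> e = e" using e by (auto simp: idempotents_def)
  have fc: "f \<in> carrier S" and ff: "f \<otimes>\<^bsub>S\<^esub> f = f" using f by (auto simp: idempotents_def)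
  have ef: "e \<otimes>\<^bsub>S\<^esub> f \<otimes>\<^bsub>S\<^esub> (e \<otimes>\<^bsub>S\<^esub> f) = e \<otimes>\<^bsub>S\<^esub> f" using idem_mult[OF S e f] by (simp add: idempotents_def)
  have fe: "f \<otimes>\<^bsub>S\<^esub> e \<otimes>\<^bsub>S\<^esub> (f \<otimes>\<^bsub>S\<^esub> e) = f \<otimes>\<^bsub>S\<^esub> e" using idem_mult[OF S f e] by (simp add: idempotents_def)
  have c1: "e \<otimes>\<^bsub>S\<^esub> f \<otimes>\<^bsub>S\<^esub> (f \<otimes>\<^bsub>S\<^esub> e) \<otimes>\<^bsub>S\<^esub> (e \<otimes>\<^bsub>S\<^esub> f) = e \<otimes>\<^bsub>S\<^esub> f"
  proof -
    have "e \<otimes>\<^bsub>S\<^esub> f \<otimes>\<^bsub>S\<^esub> (f \<otimes>\<^bsub>S\<^esub> e) \<otimes>\<^bsub>S\<^esub> (e \<otimes>\<^bsub>S\<^esub> f) = e \<otimes>\<^bsub>S\<^esub> (f \<otimes>\<^bsub>S\<^esub> f) \<otimes>\<^bsub>S\<^esub> (e \<otimes>\<^bsub>S\<^esub> e) \<otimes>\<^bsub>S\<^esub> f"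
      using cl as ec fc by simp
    also have "\<dots> = e \<otimes>\<^bsub>S\<^esub> f \<otimes>\<^bsub>S\<^esub> (e \<otimes>\<^bsub>S\<^esub> f)" unfolding ff ee using cl as ec fc by simp
    finally show ?thesis using ef by simp
  qed
  have c2: "f \<otimes>\<^bsub>S\<^esub> e \<otimes>\<^bsub>S\<^esub> (e \<otimes>\<^bsub>S\<^esub> f) \<otimes>\<^bsub>S\<^esub> (f \<otimes>\<^bsub>S\<^esub> e) = f \<otimes>\<^bsub>S\<^esub> e"
  proof -
    have "f \<otimes>\<^bsub>S\<^esub> e \<otimes>\<^bsub>S\<^esub> (e \<otimes>\<^bsub>S\<^esub> f) \<otimes>\<^bsub>S\<^esub> (f \<otimes>\<^bsub>S\<^esub> e) = f \<otimes>\<^bsub>S\<^esub> (e \<otimes>\<^bsub>S\<^esub> e) \<otimes>\<^bsub>S\<^esub> (f \<otimes>\<^bsub>S\<^esub> f) \<otimes>\<^bsub>S\<^esub> e"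
      using cl as ec fc by simp
    also have "\<dots> = f \<otimes>\<^bsub>S\<^esub> e \<otimes>\<^bsub>S\<^esub> (f \<otimes>\<^bsub>S\<^esub> e)" unfolding ff ee using cl as ec fc by simp
    finally show ?thesis using fe by simp
  qed
  have efc: "e \<otimes>\<^bsub>S\<^esub> f \<in> carrier S" "f \<otimes>\<^bsub>S\<^esub> e \<in> carrier S" using cl ec fc by auto
  have "f \<otimes>\<^bsub>S\<^esub> e = sinv S (e \<otimes>\<^bsub>S\<^esub> f)" using sinv_unique[OF S efc] c1 c2 by simp
  moreover have "e \<otimes>\<^bsub>S\<^esub> f = sinv S (e \<otimes>\<^bsub>S\<^esub> f)" using sinv_unique[OF S efc(1) efc(1)] ef by simp
  ultimately show ?thesis by simp
qed

lemma hom_sinv: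
  assumes S: "inverse_semigroup S" and T: "inverse_semigroup T" and h: "sg_hom S T p" and a: "a \<in> carrier S"
  shows "p (sinv S a) = sinv T (p a)"
proof -
  have pc: "\<And>x. x \<in> carrier S \<Longrightarrow> p x \<in> carrier T" using h by (auto simp: sg_hom_def)
  have pm: "\<And>x y. x \<in> carrier S \<Longrightarrow> y \<in> carrier S \<Longrightarrow> p (x \<otimes>\<^bsub>S\<^esub> y) = p x \<otimes>\<^bsub>T\<^esub> p y" using h by (auto simp: sg_hom_def)
  note ip = sinv_props[OF S a]
  have "p a \<otimes>\<^bsub>T\<^esub> p (sinv S a) \<otimes>\<^bsub>T\<^esub> p a = p a"
    using pm ip a is_closed[OF S] by metis
  moreover have "p (sinv S a) \<otimes>\<^bsub>T\<^esub> p a \<otimes>\<^bsub>T\<^esub> p (sinv S a) = p (sinv S a)"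
    using pm ip a is_closed[OF S] by metis
  ultimately show ?thesis using sinv_unique[OF T pc[OF a] pc[OF ip(1)]] by simp
qed

lemma sinv_idem:
  assumes S: "inverse_semigroup S" and a: "a \<in> carrier S"
  shows "a \<otimes>\<^bsub>S\<^esub> sinv S a \<in> idempotents S" "sinv S a \<otimes>\<^bsub>S\<^esub> a \<in> idempotents S"
  using sinv_props[OF S a] is_closed[OF S] is_assoc[OF S] a
  by (auto simp: idempotents_def)



lemma (in group) mid_inv:
  assumes x: "x \<in> carrier G" and y: "y \<in> carrier G" and e: "x \<otimes> y \<otimes> x = x"
  shows "y = inv x"
proof -
  have "x \<otimes> y \<otimes> x = \<one> \<otimes> x" using e x by simp
  then have "x \<otimes> y = \<one>" using x y e by (simp add: r_cancel_one)
  then have "inv y = x" using x y by (simp add: inv_equality)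
  then show ?thesis using y by (metis inv_inv)
qed

theorem proposition4p8:
  fixes A :: "'a monoid" and U :: "'u monoid" and G :: "'g monoid" and S :: "'s monoid"
    and i :: "'a \<Rightarrow> 'u" and j :: "'u \<Rightarrow> 'g" and \<pi> :: "'u \<Rightarrow> 's" and \<kappa> :: "'s \<Rightarrow> 'g"
  assumes "semilattice_of_groups A"
    and "group_extension A U G i j"
    and "inverse_semigroup S"
    and "sg_epi U S \<pi>" and "sg_epi S G \<kappa>"
    and "is_extension A U S i \<pi>"
    and "\<forall>u\<in>carrier U. j u = \<kappa> (\<pi> u)"
    and "x \<in> carrier G"
  shows "(\<exists>m. is_maximum S {s \<in> carrier S. \<kappa> s = x} m) \<longleftrightarrow>
         (\<exists>u. u \<in> carrier U \<and> j u = x \<and>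
              {v \<in> carrier U. j v = x} = {u \<otimes>\<^bsub>U\<^esub> i a | a. a \<in> carrier A})"
proof -
  have S: "inverse_semigroup S" using assms by simp
  have U: "inverse_semigroup U" and Gg: "group G" and im: "sg_mono A U i" and je: "sg_epi U G j"
    and iA: "i ` carrier A = {u \<in> carrier U. j u = \<one>\<^bsub>G\<^esub>}"
    using assms(2) by (auto simp: group_extension_def)
  have pe: "sg_epi U S \<pi>" using assms by simp
  have sep: "\<forall>e\<in>idempotents U. \<forall>f\<in>idempotents U. \<pi> e = \<pi> f \<longrightarrow> e = f"
    and iAS: "i ` carrier A = {u \<in> carrier U. \<pi> u \<in> idempotents S}"
    using assms(6) by (auto simp: is_extension_def)
  have jk: "\<And>u. u \<in> carrier U \<Longrightarrow> j u = \<kappa> (\<pi> u)" using assms(7) by simp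
  have xG: "x \<in> carrier G" by fact
  have ph: "sg_hom U S \<pi>" using pe by (simp add: sg_epi_def)
  have pc: "\<And>u. u \<in> carrier U \<Longrightarrow> \<pi> u \<in> carrier S" using ph by (auto simp: sg_hom_def)
  have pm: "\<And>u v. u \<in> carrier U \<Longrightarrow> v \<in> carrier U \<Longrightarrow> \<pi> (u \<otimes>\<^bsub>U\<^esub> v) = \<pi> u \<otimes>\<^bsub>S\<^esub> \<pi> v"
    using ph by (auto simp: sg_hom_def)
  have psurj: "\<pi> ` carrier U = carrier S" using pe by (simp add: sg_epi_def)
  have jc: "\<And>u. u \<in> carrier U \<Longrightarrow> j u \<in> carrier G" using je by (auto simp: sg_epi_def sg_hom_def)
  have jm: "\<And>u v. u \<in> carrier U \<Longrightarrow> v \<in> carrier U \<Longrightarrow> j (u \<otimes>\<^bsub>U\<^esub> v) = j u \<otimes>\<^bsub>G\<^esub> j v"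
    using je by (auto simp: sg_epi_def sg_hom_def)
  have ic: "\<And>a. a \<in> carrier A \<Longrightarrow> i a \<in> carrier U" using im by (auto simp: sg_mono_def sg_hom_def)
  note clU = is_closed[OF U] and asU = is_assoc[OF U] and clS = is_closed[OF S] and asS = is_assoc[OF S]
  show ?thesis
  proof
    assume "\<exists>m. is_maximum S {s \<in> carrier S. \<kappa> s = x} m"
    then obtain m where mc: "m \<in> carrier S" and km: "\<kappa> m = x"
      and mx: "\<And>s. s \<in> carrier S \<Longrightarrow> \<kappa> s = x \<Longrightarrow> nat_le S s m"
      by (auto simp: is_maximum_def)
    obtain u where uc: "u \<in> carrier U" and pu: "\<pi> u = m" using psurj mc by force
    have ju: "j u = x" using jk[OF uc] pu km by simp
    define u' where "u' = sinv U u"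
    have u'c: "u' \<in> carrier U" using sinv_props[OF U uc] u'_def by simp
    have pu': "\<pi> u' = sinv S m" using hom_sinv[OF U S ph uc] pu u'_def by simp
    have ju': "j u' = inv\<^bsub>G\<^esub> x"
    proof -
      have "j u \<otimes>\<^bsub>G\<^esub> j u' \<otimes>\<^bsub>G\<^esub> j u = j u" using sinv_props(2)[OF U uc] jm u'c uc clU u'_def by metis
      then have "x \<otimes>\<^bsub>G\<^esub> j u' \<otimes>\<^bsub>G\<^esub> x = x" using ju by simp
      then show ?thesis using Gg xG jc[OF u'c]
        by (simp add: group.mid_inv)
    qed
    show "\<exists>u. u \<in> carrier U \<and> j u = x \<and> {v \<in> carrier U. j v = x} = {u \<otimes>\<^bsub>U\<^esub> i a | a. a \<in> carrier A}"
    proof (intro exI conjI)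
      show "u \<in> carrier U" "j u = x" by fact+
      show "{v \<in> carrier U. j v = x} = {u \<otimes>\<^bsub>U\<^esub> i a | a. a \<in> carrier A}"
      proof (intro equalityI subsetI)
        fix v assume "v \<in> {u \<otimes>\<^bsub>U\<^esub> i a | a. a \<in> carrier A}"
        then obtain a where a: "a \<in> carrier A" and v: "v = u \<otimes>\<^bsub>U\<^esub> i a" by auto
        have "j (i a) = \<one>\<^bsub>G\<^esub>" using iA a by blast
        then show "v \<in> {v \<in> carrier U. j v = x}" using v jm[OF uc ic[OF a]] ju clU uc ic[OF a] xG Gg
          by (simp add: group.is_monoid monoid.r_one)
      next
        fix v assume "v \<in> {v \<in> carrier U. j v = x}"
        then have vc: "v \<in> carrier U" and jv: "j v = x" by auto
        have "nat_le S (\<pi> v) m" using mx pc[OF vc] jk[OF vc] jv by simp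
        then obtain e where eE: "e \<in> idempotents S" and pv: "\<pi> v = e \<otimes>\<^bsub>S\<^esub> m" by (auto simp: nat_le_def)
        have ec: "e \<in> carrier S" using eE by (simp add: idempotents_def)
        have m'c: "sinv S m \<in> carrier S" using sinv_props[OF S mc] by simp
        define g where "g = u \<otimes>\<^bsub>U\<^esub> u'"
        have gc: "g \<in> carrier U" using g_def clU uc u'c by simp
        have gE: "g \<in> idempotents U" using sinv_idem(1)[OF U uc] g_def u'_def by simp
        define w where "w = g \<otimes>\<^bsub>U\<^esub> v"
        have wc: "w \<in> carrier U" using w_def clU gc vc by simp
        have pw: "\<pi> w = \<pi> v"
        proof -
          have mmE: "m \<otimes>\<^bsub>S\<^esub> sinv S m \<in> idempotents S" using sinv_idem(1)[OF S mc] .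
          have "\<pi> w = m \<otimes>\<^bsub>S\<^esub> sinv S m \<otimes>\<^bsub>S\<^esub> e \<otimes>\<^bsub>S\<^esub> m"
            using w_def g_def pm uc u'c vc gc pu pu' pv clS asS mc m'c ec by simp
          also have "\<dots> = e \<otimes>\<^bsub>S\<^esub> (m \<otimes>\<^bsub>S\<^esub> sinv S m) \<otimes>\<^bsub>S\<^esub> m"
            using idem_comm[OF S mmE eE] by simp
          also have "\<dots> = e \<otimes>\<^bsub>S\<^esub> m" using sinv_props[OF S mc] asS clS mc m'c ec by simp
          finally show ?thesis using pv by simp
        qed
        define h where "h = w \<otimes>\<^bsub>U\<^esub> sinv U w"
        define k where "k = v \<otimes>\<^bsub>U\<^esub> sinv U v"
        have hE: "h \<in> idempotents U" using sinv_idem(1)[OF U wc] h_def by simp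
        have kE: "k \<in> idempotents U" using sinv_idem(1)[OF U vc] k_def by simp
        have w'c: "sinv U w \<in> carrier U" using sinv_props[OF U wc] by simp
        have v'c: "sinv U v \<in> carrier U" using sinv_props[OF U vc] by simp
        have "\<pi> h = \<pi> k" unfolding h_def k_def
          using pm[OF wc w'c] pm[OF vc v'c] hom_sinv[OF U S ph wc] hom_sinv[OF U S ph vc] pw by simp
        then have hk: "h = k" using sep hE kE by blast
        have gg: "g \<otimes>\<^bsub>U\<^esub> g = g" using gE by (simp add: idempotents_def)
        have gw: "g \<otimes>\<^bsub>U\<^esub> w = w"
          unfolding w_def using asU[OF gc gc vc] gg by simp
        have gh: "g \<otimes>\<^bsub>U\<^esub> h = h"
          unfolding h_def using asU[OF gc wc w'c] gw by simp
        have wv: "w = v"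
        proof -
          have kv: "k \<otimes>\<^bsub>U\<^esub> v = v" using sinv_props(2)[OF U vc] k_def by simp
          have "w = g \<otimes>\<^bsub>U\<^esub> (k \<otimes>\<^bsub>U\<^esub> v)" using kv w_def by simp
          also have "\<dots> = (g \<otimes>\<^bsub>U\<^esub> k) \<otimes>\<^bsub>U\<^esub> v" using asU gc vc v'c clU k_def by simp
          also have "\<dots> = v" using gh hk kv by simp
          finally show ?thesis .
        qed
        define b where "b = u' \<otimes>\<^bsub>U\<^esub> v"
        have bc: "b \<in> carrier U" using b_def clU u'c vc by simp
        have "j b = \<one>\<^bsub>G\<^esub>" using b_def jm[OF u'c vc] ju' jv xG Gg by (simp add: group.l_inv)
        then obtain a where a: "a \<in> carrier A" and ia: "i a = b" using iA bc by force
        have "u \<otimes>\<^bsub>U\<^esub> i a = w" using ia b_def w_def g_def asU uc u'c vc by simp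
        then show "v \<in> {u \<otimes>\<^bsub>U\<^esub> i a | a. a \<in> carrier A}" using wv a by auto
      qed
    qed
  next
    assume "\<exists>u. u \<in> carrier U \<and> j u = x \<and> {v \<in> carrier U. j v = x} = {u \<otimes>\<^bsub>U\<^esub> i a | a. a \<in> carrier A}"
    then obtain u where uc: "u \<in> carrier U" and ju: "j u = x"
      and eq: "{v \<in> carrier U. j v = x} = {u \<otimes>\<^bsub>U\<^esub> i a | a. a \<in> carrier A}" by blast
    define m where "m = \<pi> u"
    have mc: "m \<in> carrier S" using pc uc m_def by simp
    have m'c: "sinv S m \<in> carrier S" using sinv_props[OF S mc] by simp
    show "\<exists>m. is_maximum S {s \<in> carrier S. \<kappa> s = x} m"
    proof (intro exI)
      show "is_maximum S {s \<in> carrier S. \<kappa> s = x} m"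
        unfolding is_maximum_def
      proof (intro conjI ballI)
        show "m \<in> {s \<in> carrier S. \<kappa> s = x}" using mc jk[OF uc] ju m_def by simp
        fix s assume "s \<in> {s \<in> carrier S. \<kappa> s = x}"
        then have sc: "s \<in> carrier S" and ks: "\<kappa> s = x" by auto
        obtain v where vc: "v \<in> carrier U" and pv: "\<pi> v = s" using psurj sc by force
        have "j v = x" using jk[OF vc] pv ks by simp
        then have "v \<in> {u \<otimes>\<^bsub>U\<^esub> i a | a. a \<in> carrier A}" using eq vc by blast
        then obtain a where a: "a \<in> carrier A" and v: "v = u \<otimes>\<^bsub>U\<^esub> i a" by auto
        define f where "f = \<pi> (i a)"
        have fE: "f \<in> idempotents S" using iAS a f_def by blast
        have fc: "f \<in> carrier S" using fE by (simp add: idempotents_def)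
        have ff: "f \<otimes>\<^bsub>S\<^esub> f = f" using fE by (simp add: idempotents_def)
        have s: "s = m \<otimes>\<^bsub>S\<^esub> f" using pv v pm[OF uc ic[OF a]] m_def f_def by simp
        have mmE: "sinv S m \<otimes>\<^bsub>S\<^esub> m \<in> idempotents S" using sinv_idem(2)[OF S mc] .
        have cm: "f \<otimes>\<^bsub>S\<^esub> (sinv S m \<otimes>\<^bsub>S\<^esub> m) = sinv S m \<otimes>\<^bsub>S\<^esub> m \<otimes>\<^bsub>S\<^esub> f"
          using idem_comm[OF S fE mmE] .
        define e where "e = m \<otimes>\<^bsub>S\<^esub> f \<otimes>\<^bsub>S\<^esub> sinv S m"
        have ec: "e \<in> carrier S" using e_def clS mc fc m'c by simp
        have em: "e \<otimes>\<^bsub>S\<^esub> m = s"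
        proof -
          have "e \<otimes>\<^bsub>S\<^esub> m = m \<otimes>\<^bsub>S\<^esub> (f \<otimes>\<^bsub>S\<^esub> (sinv S m \<otimes>\<^bsub>S\<^esub> m))"
            using e_def asS clS mc fc m'c by simp
          also have "\<dots> = (m \<otimes>\<^bsub>S\<^esub> sinv S m \<otimes>\<^bsub>S\<^esub> m) \<otimes>\<^bsub>S\<^esub> f"
            using cm asS clS mc fc m'c by simp
          also have "\<dots> = s" using sinv_props(2)[OF S mc] s by simp
          finally show ?thesis .
        qed
        have "e \<otimes>\<^bsub>S\<^esub> e = e"
        proof -
          have "e \<otimes>\<^bsub>S\<^esub> e = (e \<otimes>\<^bsub>S\<^esub> m) \<otimes>\<^bsub>S\<^esub> f \<otimes>\<^bsub>S\<^esub> sinv S m"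
            using e_def asS clS mc fc m'c ec by simp
          also have "\<dots> = m \<otimes>\<^bsub>S\<^esub> (f \<otimes>\<^bsub>S\<^esub> f) \<otimes>\<^bsub>S\<^esub> sinv S m"
            using em s asS clS mc fc m'c by simp
          finally show ?thesis using ff e_def by simp
        qed
        then have "e \<in> idempotents S" using ec by (simp add: idempotents_def)
        then show "nat_le S s m" using em unfolding nat_le_def by metis
      qed
    qed
  qed
qed

end
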